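(* Let $M$ be an $\mathbf{FB}$-module and $a:\mathrm{Sym}(\mathbf V)\otimes M\to\mathbf V\otimes M$ a map, and write, for $B\subseteq S$ and $x\in M(S\setminus B)$, $$a(t^B\otimes x)=\sum_{i\in B}t^i\otimes\omega^{S\setminus\{i\}}_{B\setminus\{i\}}(x)+\sum_{i\in S\setminus B}t^i\otimes\alpha^S_{i,B}(x),$$ with $\omega^T_C:M(T\setminus C)\to M(T)$ and $\alpha^S_{i,B}:M(S\setminus B)\to M(S\setminus\{i\})$. Then $a$ defines a representation of $\underline W(\mathbf V)$ if and only if, for every finite set $S$ and disjoint subsets $A,B\subseteq S$: (a) $\alpha$ and $\omega$ commute with themselves and each other; (b) for $j\in B$ and $i\in S\setminus(A\cup B)$, $\alpha^{S\setminus\{i\}}_{j,A}\circ\alpha^{S\setminus A}_{i,B}=\alpha^{S\setminus\{j\}}_{i,(A\cup B)\setminus\{j\}}$; (c) for $j\in B$, $\alpha^S_{j,A}\circ\omega^{S\setminus A}_B=\omega^{S\setminus\{j\}}_{(A\cup B)\setminus\{j\}}$.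
   Context: $k$ is a commutative ring; $\mathbf{FB}$-modules are functors from finite sets and bijections to $k$-modules, $(M\otimes N)(S)=\bigoplus_{T\subseteq S}M(T)\otimes N(S\setminus T)$, symmetry $\tau$. $\mathbf V$ is $k$ on singletons, $0$ otherwise, basis $t^i$. $\mathrm{Sym}(\mathbf V)=\bigoplus_n\mathrm{Sym}^n(\mathbf V)$, $\mathrm{Sym}^n(\mathbf V)(S)$ free with basis $t^S$ if $|S|=n$, else $0$. $m(t^A\otimes t^B)=t^{A\cup B}$; $\Delta(t^B)=\sum_{j\in B}t^j\otimes t^{B\setminus\{j\}}\in\mathbf V\otimes\mathrm{Sym}(\mathbf V)$. Representation of $\underline W(\mathbf V)$: $[a_1,a_2]=a'-a''$, where $a_2=\mathrm{id}\otimes a$, $a_1=\tau(\mathrm{id}\otimes a)\tau$, $[a_1,a_2]=a_1a_2-a_2a_1$ as maps $\mathrm{Sym}\otimes\mathrm{Sym}\otimes M\to\mathbf V\otimes\mathbf V\otimes M$, $a'=(\mathrm{id}_{\mathbf V}\otimes a)(\mathrm{id}_{\mathbf V}\otimes m\otimes\mathrm{id})(\tau\otimes\mathrm{id}\otimes\mathrm{id})(\mathrm{id}\otimes\Delta\otimes\mathrm{id})$, $a''=\tau a'\tau$. Operations: $\alpha$ is the family $\alpha^S_{\{i\},B}=\alpha^S_{i,B}$ and $\omega$ the family $\omega^S_{\emptyset,B}=\omega^S_B$ of maps $M(S\setminus B)\to M(S\setminus A)$ indexed by disjoint subsets, natural in bijections. Families $\phi,\psi$ commute if for every finite $S$ and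 pairwise disjoint $A,B,C,D\subseteq S$ for which the maps are defined, $\psi^{S\setminus A}_{C,D}\circ\phi^{S\setminus D}_{A,B}=\phi^{S\setminus C}_{A,B}\circ\psi^{S\setminus B}_{C,D}$ (self-commuting: $\psi=\phi$). *)

theory Defs
  imports Main "HOL.Modules"
begin

text \<open>
Finite sets are finite subsets of a label type 'a (assumed infinite, so that
every finite set arises up to bijection).  The ground ring k is a type 'k of class comm_ring_1,
and all k-modules M(S) are submodules of one ambient k-module 'm with scalar action scale.

Since Sym(V)(T) and V(T) are free of rank one (bases t^T, t^i), tensor products of them with M
are written out as direct sums of copies of M:
  (Sym(V) ox M)(S)          = sum_{B subset S} t^B ox M(S-B)          encoded f :: 'a set => 'm
  (V ox M)(S)               = sum_{i in S} t^i ox M(S-{i})            encoded g :: 'a => 'm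
  (Sym ox Sym ox M)(S)      encoded h B1 B2 (coefficient of t^B1 ox t^B2)
  (Sym ox V ox M)(S)        encoded p B i,     (V ox Sym ox M)(S) encoded q i B,
  (V ox V ox M)(S)          encoded g i j,     (Sym ox V ox Sym ox M)(S) encoded r B1 j B2.
Coefficients outside the index range are 0.
\<close>

definition lin_on :: "('k::comm_ring_1 \<Rightarrow> 'm::ab_group_add \<Rightarrow> 'm) \<Rightarrow>
    ('n::ab_group_add \<Rightarrow> 'n \<Rightarrow> bool) \<Rightarrow> ('k \<Rightarrow> 'n \<Rightarrow> 'n) \<Rightarrow> 'm set \<Rightarrow> ('m \<Rightarrow> 'n) \<Rightarrow> bool"
  where "lin_on scale eq scale' X f \<longleftrightarrow>
     (\<forall>x\<in>X. \<forall>y\<in>X. eq (f (x + y)) (f x + f y)) \<and> (\<forall>c. \<forall>x\<in>X. eq (f (scale c x)) (scale' c (f x)))"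

definition FB_module :: "('k::comm_ring_1 \<Rightarrow> 'm::ab_group_add \<Rightarrow> 'm) \<Rightarrow> ('a set \<Rightarrow> 'm set)
    \<Rightarrow> (('a \<Rightarrow> 'a) \<Rightarrow> 'a set \<Rightarrow> 'm \<Rightarrow> 'm) \<Rightarrow> bool"
  where "FB_module scale M act \<longleftrightarrow>
     module scale \<and>
     (\<forall>S. finite S \<longrightarrow> module.subspace scale (M S)) \<and>
     (\<forall>S \<sigma>. finite S \<and> inj_on \<sigma> S \<longrightarrow>
        (\<forall>x\<in>M S. act \<sigma> S x \<in> M (\<sigma> ` S)) \<and> lin_on scale (=) scale (M S) (act \<sigma> S)) \<and>
     (\<forall>S. \<forall>x\<in>M S. finite S \<longrightarrow> act id S x = x) \<and>
     (\<forall>S \<sigma> \<tau>. finite S \<and> inj_on \<sigma> S \<and> inj_on \<tau> (\<sigma> ` S) \<longrightarrow>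
        (\<forall>x\<in>M S. act (\<tau> \<circ> \<sigma>) S x = act \<tau> (\<sigma> ` S) (act \<sigma> S x))) \<and>
     (\<forall>S \<sigma> \<sigma>'. finite S \<and> inj_on \<sigma> S \<and> (\<forall>i\<in>S. \<sigma> i = \<sigma>' i) \<longrightarrow>
        (\<forall>x\<in>M S. act \<sigma> S x = act \<sigma>' S x))"

definition SymM :: "('a set \<Rightarrow> 'm::zero set) \<Rightarrow> 'a set \<Rightarrow> ('a set \<Rightarrow> 'm) set"
  where "SymM M S = {f. (\<forall>B. B \<subseteq> S \<longrightarrow> f B \<in> M (S - B)) \<and> (\<forall>B. \<not> B \<subseteq> S \<longrightarrow> f B = 0)}"

definition VM :: "('a set \<Rightarrow> 'm::zero set) \<Rightarrow> 'a set \<Rightarrow> ('a \<Rightarrow> 'm) set"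
  where "VM M S = {g. (\<forall>i\<in>S. g i \<in> M (S - {i})) \<and> (\<forall>i. i \<notin> S \<longrightarrow> g i = 0)}"

definition SymSymM :: "('a set \<Rightarrow> 'm::zero set) \<Rightarrow> 'a set \<Rightarrow> ('a set \<Rightarrow> 'a set \<Rightarrow> 'm) set"
  where "SymSymM M S = {h. \<forall>B1 B2.
      (B1 \<subseteq> S \<and> B2 \<subseteq> S \<and> B1 \<inter> B2 = {} \<longrightarrow> h B1 B2 \<in> M (S - B1 - B2)) \<and>
      (\<not> (B1 \<subseteq> S \<and> B2 \<subseteq> S \<and> B1 \<inter> B2 = {}) \<longrightarrow> h B1 B2 = 0)}"

definition single :: "'a set \<Rightarrow> 'm::zero \<Rightarrow> 'a set \<Rightarrow> 'm"
  where "single B x = (\<lambda>C. if C = B then x else 0)"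

definition act_SymM :: "(('a \<Rightarrow> 'a) \<Rightarrow> 'a set \<Rightarrow> 'm \<Rightarrow> 'm) \<Rightarrow> ('a \<Rightarrow> 'a) \<Rightarrow> 'a set
    \<Rightarrow> ('a set \<Rightarrow> 'm::zero) \<Rightarrow> 'a set \<Rightarrow> 'm"
  where "act_SymM act \<sigma> S f = (\<lambda>B'. if B' \<subseteq> \<sigma> ` S
      then act \<sigma> (S - (S \<inter> \<sigma> -` B')) (f (S \<inter> \<sigma> -` B')) else 0)"

definition act_VM :: "(('a \<Rightarrow> 'a) \<Rightarrow> 'a set \<Rightarrow> 'm \<Rightarrow> 'm) \<Rightarrow> ('a \<Rightarrow> 'a) \<Rightarrow> 'a set
    \<Rightarrow> ('a \<Rightarrow> 'm::zero) \<Rightarrow> 'a \<Rightarrow> 'm"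
  where "act_VM act \<sigma> S g = (\<lambda>i'. if i' \<in> \<sigma> ` S
      then act \<sigma> (S - {the_inv_into S \<sigma> i'}) (g (the_inv_into S \<sigma> i')) else 0)"

definition FB_map_SymM_VM :: "('k::comm_ring_1 \<Rightarrow> 'm::ab_group_add \<Rightarrow> 'm) \<Rightarrow> ('a set \<Rightarrow> 'm set)
    \<Rightarrow> (('a \<Rightarrow> 'a) \<Rightarrow> 'a set \<Rightarrow> 'm \<Rightarrow> 'm) \<Rightarrow> ('a set \<Rightarrow> ('a set \<Rightarrow> 'm) \<Rightarrow> 'a \<Rightarrow> 'm) \<Rightarrow> bool"
  where "FB_map_SymM_VM scale M act a \<longleftrightarrow>
     (\<forall>S. finite S \<longrightarrow>
        (\<forall>f\<in>SymM M S. a S f \<in> VM M S) \<and>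
        (\<forall>f\<in>SymM M S. \<forall>g\<in>SymM M S. a S (\<lambda>B. f B + g B) = (\<lambda>i. a S f i + a S g i)) \<and>
        (\<forall>c. \<forall>f\<in>SymM M S. a S (\<lambda>B. scale c (f B)) = (\<lambda>i. scale c (a S f i)))) \<and>
     (\<forall>S \<sigma>. finite S \<and> inj_on \<sigma> S \<longrightarrow>
        (\<forall>f\<in>SymM M S. a (\<sigma> ` S) (act_SymM act \<sigma> S f) = act_VM act \<sigma> S (a S f)))"

text \<open>Symmetry tau (swapping the first two tensor factors).\<close>
definition tau :: "('x \<Rightarrow> 'y \<Rightarrow> 'z) \<Rightarrow> 'y \<Rightarrow> 'x \<Rightarrow> 'z"
  where "tau h = (\<lambda>y x. h x y)"

definition idSym_a :: "('a set \<Rightarrow> ('a set \<Rightarrow> 'm::zero) \<Rightarrow> 'a \<Rightarrow> 'm) \<Rightarrow> 'a set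
    \<Rightarrow> ('a set \<Rightarrow> 'a set \<Rightarrow> 'm) \<Rightarrow> 'a set \<Rightarrow> 'a \<Rightarrow> 'm"
  where "idSym_a a S h = (\<lambda>B i. if B \<subseteq> S \<and> i \<in> S - B then a (S - B) (h B) i else 0)"

definition idV_a :: "('a set \<Rightarrow> ('a set \<Rightarrow> 'm::zero) \<Rightarrow> 'a \<Rightarrow> 'm) \<Rightarrow> 'a set
    \<Rightarrow> ('a \<Rightarrow> 'a set \<Rightarrow> 'm) \<Rightarrow> 'a \<Rightarrow> 'a \<Rightarrow> 'm"
  where "idV_a a S q = (\<lambda>i j. if i \<in> S \<and> j \<in> S - {i} then a (S - {i}) (q i) j else 0)"

text \<open>id ox Delta ox id : (Sym ox Sym ox M)(S) -> (Sym ox V ox Sym ox M)(S),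
  Delta(t^B) = sum_{j in B} t^j ox t^(B - {j}).\<close>
definition idDelta :: "('a set \<Rightarrow> 'a set \<Rightarrow> 'm::zero) \<Rightarrow> 'a set \<Rightarrow> 'a \<Rightarrow> 'a set \<Rightarrow> 'm"
  where "idDelta h = (\<lambda>B1 j B2. if j \<notin> B2 then h B1 (insert j B2) else 0)"

text \<open>id_V ox m ox id : (V ox Sym ox Sym ox M)(S) -> (V ox Sym ox M)(S), m(t^A ox t^B) = t^(A Un B).\<close>
definition idV_m :: "('a \<Rightarrow> 'a set \<Rightarrow> 'a set \<Rightarrow> 'm::comm_monoid_add) \<Rightarrow> 'a \<Rightarrow> 'a set \<Rightarrow> 'm"
  where "idV_m s = (\<lambda>j B. \<Sum>B1\<in>Pow B. s j B1 (B - B1))"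

definition a1a2 :: "('a set \<Rightarrow> ('a set \<Rightarrow> 'm::zero) \<Rightarrow> 'a \<Rightarrow> 'm) \<Rightarrow> 'a set
    \<Rightarrow> ('a set \<Rightarrow> 'a set \<Rightarrow> 'm) \<Rightarrow> 'a \<Rightarrow> 'a \<Rightarrow> 'm"
  where "a1a2 a S h = tau (idV_a a S (tau (idSym_a a S h)))"

definition a2a1 :: "('a set \<Rightarrow> ('a set \<Rightarrow> 'm::zero) \<Rightarrow> 'a \<Rightarrow> 'm) \<Rightarrow> 'a set
    \<Rightarrow> ('a set \<Rightarrow> 'a set \<Rightarrow> 'm) \<Rightarrow> 'a \<Rightarrow> 'a \<Rightarrow> 'm"
  where "a2a1 a S h = idV_a a S (tau (idSym_a a S (tau h)))"

definition a_prime :: "('a set \<Rightarrow> ('a set \<Rightarrow> 'm::comm_monoid_add) \<Rightarrow> 'a \<Rightarrow> 'm) \<Rightarrow> 'a set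
    \<Rightarrow> ('a set \<Rightarrow> 'a set \<Rightarrow> 'm) \<Rightarrow> 'a \<Rightarrow> 'a \<Rightarrow> 'm"
  where "a_prime a S h = idV_a a S (idV_m (tau (idDelta h)))"

definition a_dprime :: "('a set \<Rightarrow> ('a set \<Rightarrow> 'm::comm_monoid_add) \<Rightarrow> 'a \<Rightarrow> 'm) \<Rightarrow> 'a set
    \<Rightarrow> ('a set \<Rightarrow> 'a set \<Rightarrow> 'm) \<Rightarrow> 'a \<Rightarrow> 'a \<Rightarrow> 'm"
  where "a_dprime a S h = tau (a_prime a S (tau h))"

definition is_W_rep :: "('a set \<Rightarrow> 'm::ab_group_add set) \<Rightarrow> ('a set \<Rightarrow> ('a set \<Rightarrow> 'm) \<Rightarrow> 'a \<Rightarrow> 'm) \<Rightarrow> bool"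
  where "is_W_rep M a \<longleftrightarrow> (\<forall>S. finite S \<longrightarrow> (\<forall>h\<in>SymSymM M S. \<forall>i j.
      a1a2 a S h i j - a2a1 a S h i j = a_prime a S h i j - a_dprime a S h i j))"

text \<open>A family phi^S_{A,B} : M(S - B) -> M(S - A), defined for index sets A with P A.\<close>
definition commute :: "('a set \<Rightarrow> 'm set) \<Rightarrow> ('a set \<Rightarrow> bool) \<Rightarrow> ('a set \<Rightarrow> 'a set \<Rightarrow> 'a set \<Rightarrow> 'm \<Rightarrow> 'm)
    \<Rightarrow> ('a set \<Rightarrow> bool) \<Rightarrow> ('a set \<Rightarrow> 'a set \<Rightarrow> 'a set \<Rightarrow> 'm \<Rightarrow> 'm) \<Rightarrow> bool"
  where "commute M P\<phi> \<phi> P\<psi> \<psi> \<longleftrightarrow> (\<forall>S A B C D.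
      finite S \<and> A \<subseteq> S \<and> B \<subseteq> S \<and> C \<subseteq> S \<and> D \<subseteq> S \<and>
      A \<inter> B = {} \<and> A \<inter> C = {} \<and> A \<inter> D = {} \<and> B \<inter> C = {} \<and> B \<inter> D = {} \<and> C \<inter> D = {} \<and>
      P\<phi> A \<and> P\<psi> C \<longrightarrow>
      (\<forall>x\<in>M (S - (B \<union> D)). \<psi> (S - A) C D (\<phi> (S - D) A B x) = \<phi> (S - C) A B (\<psi> (S - B) C D x)))"

text \<open>alpha^S_{{i},B} = alpha^S_{i,B}  (alpha S i B);  omega^S_{{},B} = omega^S_B  (omega S B).\<close>
definition alpha_family :: "('a set \<Rightarrow> 'a \<Rightarrow> 'a set \<Rightarrow> 'm \<Rightarrow> 'm) \<Rightarrow> 'a set \<Rightarrow> 'a set \<Rightarrow> 'a set \<Rightarrow> 'm \<Rightarrow> 'm"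
  where "alpha_family \<alpha> = (\<lambda>S A B. \<alpha> S (the_elem A) B)"

definition omega_family :: "('a set \<Rightarrow> 'a set \<Rightarrow> 'm \<Rightarrow> 'm) \<Rightarrow> 'a set \<Rightarrow> 'a set \<Rightarrow> 'a set \<Rightarrow> 'm \<Rightarrow> 'm"
  where "omega_family \<omega> = (\<lambda>S A B. \<omega> S B)"

end

theory Submission
  imports Defs
begin

definition gen :: "'a set \<Rightarrow> 'a set \<Rightarrow> 'm::zero \<Rightarrow> 'a set \<Rightarrow> 'a set \<Rightarrow> 'm"
  where "gen B1 B2 x = (\<lambda>C1 C2. if C1 = B1 \<and> C2 = B2 then x else 0)"

definition Aop :: "('a set \<Rightarrow> 'a \<Rightarrow> 'a set \<Rightarrow> 'm \<Rightarrow> 'm) \<Rightarrow> ('a set \<Rightarrow> 'a set \<Rightarrow> 'm \<Rightarrow> 'm) \<Rightarrow> 'a set \<Rightarrow> 'a set \<Rightarrow> 'm \<Rightarrow> 'a \<Rightarrow> 'm::zero"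
  where "Aop al om S B x i = (if i \<in> B then om (S - {i}) (B - {i}) x else if i \<in> S then al S i B x else 0)"

locale wr =
  fixes M :: "'a set \<Rightarrow> 'm::ab_group_add set"
    and a :: "'a set \<Rightarrow> ('a set \<Rightarrow> 'm) \<Rightarrow> 'a \<Rightarrow> 'm"
    and \<alpha> :: "'a set \<Rightarrow> 'a \<Rightarrow> 'a set \<Rightarrow> 'm \<Rightarrow> 'm"
    and \<omega> :: "'a set \<Rightarrow> 'a set \<Rightarrow> 'm \<Rightarrow> 'm"
  assumes M0: "finite T \<Longrightarrow> 0 \<in> M T"
    and Madd: "finite T \<Longrightarrow> x \<in> M T \<Longrightarrow> y \<in> M T \<Longrightarrow> x + y \<in> M T"
    and aV: "finite S \<Longrightarrow> f \<in> SymM M S \<Longrightarrow> a S f \<in> VM M S"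
    and aadd: "finite S \<Longrightarrow> f \<in> SymM M S \<Longrightarrow> g \<in> SymM M S \<Longrightarrow>
        a S (\<lambda>B. f B + g B) = (\<lambda>i. a S f i + a S g i)"
    and dec: "\<And>S B x. finite S \<Longrightarrow> B \<subseteq> S \<Longrightarrow> x \<in> M (S - B) \<Longrightarrow>
        a S (single B x) =
          (\<lambda>i. if i \<in> B then \<omega> (S - {i}) (B - {i}) x
               else if i \<in> S then \<alpha> S i B x else 0)"
begin

lemma zero_SymM: "finite S \<Longrightarrow> (\<lambda>_. 0) \<in> SymM M S"
  by (auto simp: SymM_def M0)

lemma a_zero: "finite S \<Longrightarrow> a S (\<lambda>_. 0) = (\<lambda>_. 0)"
proof -
  assume S: "finite S"
  have "a S (\<lambda>B. 0 + 0) = (\<lambda>i. a S (\<lambda>_. 0) i + a S (\<lambda>_. 0) i)"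
    using aadd[OF S zero_SymM[OF S] zero_SymM[OF S]] .
  then have "\<And>i. a S (\<lambda>_. 0) i = a S (\<lambda>_. 0) i + a S (\<lambda>_. 0) i"
    by (simp add: fun_eq_iff)
  then show ?thesis by (simp add: fun_eq_iff)
qed

lemma sum_M: "finite T \<Longrightarrow> (\<And>x. x \<in> X \<Longrightarrow> f x \<in> M T) \<Longrightarrow> sum f X \<in> M T"
proof (induct X rule: infinite_finite_induct)
  case (insert x F)
  then show ?case by (simp add: Madd)
qed (simp_all add: M0)

lemma SymSymD1: "h \<in> SymSymM M S \<Longrightarrow> B1 \<subseteq> S \<Longrightarrow> B2 \<subseteq> S \<Longrightarrow> B1 \<inter> B2 = {} \<Longrightarrow> h B1 B2 \<in> M (S - B1 - B2)"
  unfolding SymSymM_def by simp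

lemma SymSymD2: "h \<in> SymSymM M S \<Longrightarrow> \<not> (B1 \<subseteq> S \<and> B2 \<subseteq> S \<and> B1 \<inter> B2 = {}) \<Longrightarrow> h B1 B2 = 0"
  unfolding SymSymM_def by simp

lemma SymSym_row: assumes h: "h \<in> SymSymM M S" and B: "B \<subseteq> S" shows "h B \<in> SymM M (S - B)"
  unfolding SymM_def
proof (intro CollectI conjI allI impI)
  fix C
  { assume C: "C \<subseteq> S - B"
    then show "h B C \<in> M (S - B - C)" using SymSymD1[OF h B] by blast }
  { assume C: "\<not> C \<subseteq> S - B"
    then have "\<not> (B \<subseteq> S \<and> C \<subseteq> S \<and> B \<inter> C = {})" by blast
    then show "h B C = 0" using SymSymD2[OF h] by blast }
qed

lemma SymSymI: "(\<And>B1 B2. B1 \<subseteq> S \<Longrightarrow> B2 \<subseteq> S \<Longrightarrow> B1 \<inter> B2 = {} \<Longrightarrow> h B1 B2 \<in> M (S - B1 - B2))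
  \<Longrightarrow> (\<And>B1 B2. \<not> (B1 \<subseteq> S \<and> B2 \<subseteq> S \<and> B1 \<inter> B2 = {}) \<Longrightarrow> h B1 B2 = 0) \<Longrightarrow> h \<in> SymSymM M S"
  unfolding SymSymM_def by auto

lemma tau_SymSym: assumes h: "h \<in> SymSymM M S" shows "tau h \<in> SymSymM M S"
proof (rule SymSymI)
  fix B1 B2 assume "B1 \<subseteq> S" "B2 \<subseteq> S" "B1 \<inter> B2 = {}"
  then have "h B2 B1 \<in> M (S - B2 - B1)" using SymSymD1[OF h] by (simp add: Int_commute)
  moreover have "S - B2 - B1 = S - B1 - B2" by blast
  ultimately show "tau h B1 B2 \<in> M (S - B1 - B2)" by (simp add: tau_def)
next
  fix B1 B2 assume "\<not> (B1 \<subseteq> S \<and> B2 \<subseteq> S \<and> B1 \<inter> B2 = {})"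
  then have "\<not> (B2 \<subseteq> S \<and> B1 \<subseteq> S \<and> B2 \<inter> B1 = {})" by blast
  then show "tau h B1 B2 = 0" using SymSymD2[OF h] by (simp add: tau_def)
qed

lemma SymMI: "(\<And>B. B \<subseteq> S \<Longrightarrow> f B \<in> M (S - B)) \<Longrightarrow> (\<And>B. \<not> B \<subseteq> S \<Longrightarrow> f B = 0) \<Longrightarrow> f \<in> SymM M S"
  unfolding SymM_def by auto

lemma VMD: "g \<in> VM M S \<Longrightarrow> i \<in> S \<Longrightarrow> g i \<in> M (S - {i})"
  unfolding VM_def by auto

lemma idSym_col: assumes S: "finite S" and h: "h \<in> SymSymM M S"
  shows "(\<lambda>B. idSym_a a S h B i) \<in> SymM M (S - {i})"
proof (rule SymMI)
  fix B assume B: "B \<subseteq> S - {i}"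
  show "idSym_a a S h B i \<in> M (S - {i} - B)"
  proof (cases "i \<in> S")
    case True
    have "a (S - B) (h B) \<in> VM M (S - B)"
      using aV[OF _ SymSym_row[OF h]] B S by (meson Diff_subset finite_subset subset_trans)
    then have "a (S - B) (h B) i \<in> M (S - B - {i})" using True B VMD by blast
    moreover have "S - B - {i} = S - {i} - B" by blast
    ultimately show ?thesis using True B unfolding idSym_a_def by auto
  next
    case False
    then show ?thesis using S by (simp add: idSym_a_def M0)
  qed
next
  fix B assume "\<not> B \<subseteq> S - {i}"
  then show "idSym_a a S h B i = 0" unfolding idSym_a_def by auto
qed

lemma SymSym_add: assumes h: "h \<in> SymSymM M S" and h': "h' \<in> SymSymM M S" and S: "finite S"
  shows "(\<lambda>B1 B2. h B1 B2 + h' B1 B2) \<in> SymSymM M S"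
proof (rule SymSymI)
  fix B1 B2 assume "B1 \<subseteq> S" "B2 \<subseteq> S" "B1 \<inter> B2 = {}"
  then show "h B1 B2 + h' B1 B2 \<in> M (S - B1 - B2)"
    using SymSymD1[OF h] SymSymD1[OF h'] Madd S by simp
next
  fix B1 B2 assume "\<not> (B1 \<subseteq> S \<and> B2 \<subseteq> S \<and> B1 \<inter> B2 = {})"
  then show "h B1 B2 + h' B1 B2 = 0" using SymSymD2[OF h] SymSymD2[OF h'] by simp
qed

lemma idSym_add: assumes h: "h \<in> SymSymM M S" and h': "h' \<in> SymSymM M S" and S: "finite S"
  shows "idSym_a a S (\<lambda>B1 B2. h B1 B2 + h' B1 B2) B i = idSym_a a S h B i + idSym_a a S h' B i"
proof (cases "B \<subseteq> S \<and> i \<in> S - B")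
  case True
  have "a (S - B) (\<lambda>C. h B C + h' B C) = (\<lambda>i. a (S - B) (h B) i + a (S - B) (h' B) i)"
    using aadd[OF _ SymSym_row[OF h] SymSym_row[OF h']] True S by simp
  then show ?thesis using True unfolding idSym_a_def by simp
next
  case False then show ?thesis unfolding idSym_a_def by auto
qed

lemma idVtau_add: assumes h: "h \<in> SymSymM M S" and h': "h' \<in> SymSymM M S" and S: "finite S"
  shows "idV_a a S (tau (idSym_a a S (\<lambda>B1 B2. h B1 B2 + h' B1 B2))) q p
     = idV_a a S (tau (idSym_a a S h)) q p + idV_a a S (tau (idSym_a a S h')) q p"
proof (cases "q \<in> S \<and> p \<in> S - {q}")
  case True
  have e: "tau (idSym_a a S (\<lambda>B1 B2. h B1 B2 + h' B1 B2)) q = (\<lambda>B. idSym_a a S h B q + idSym_a a S h' B q)"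
    using idSym_add[OF h h' S] by (simp add: tau_def)
  have "a (S - {q}) (\<lambda>B. idSym_a a S h B q + idSym_a a S h' B q)
     = (\<lambda>i. a (S - {q}) (\<lambda>B. idSym_a a S h B q) i + a (S - {q}) (\<lambda>B. idSym_a a S h' B q) i)"
    using aadd[OF _ idSym_col[OF S h] idSym_col[OF S h']] S by simp
  then show ?thesis using True e unfolding idV_a_def by (simp add: tau_def)
next
  case False then show ?thesis unfolding idV_a_def by auto
qed

lemma tau_add: "tau (\<lambda>B1 B2. h B1 B2 + h' B1 B2) = (\<lambda>B1 B2. tau h B1 B2 + tau h' B1 B2)"
  by (simp add: tau_def)

lemma a1a2_add: assumes h: "h \<in> SymSymM M S" and h': "h' \<in> SymSymM M S" and S: "finite S"
  shows "a1a2 a S (\<lambda>B1 B2. h B1 B2 + h' B1 B2) p q = a1a2 a S h p q + a1a2 a S h' p q"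
  using idVtau_add[OF h h' S] unfolding a1a2_def by (simp add: tau_def)

lemma a2a1_add: assumes h: "h \<in> SymSymM M S" and h': "h' \<in> SymSymM M S" and S: "finite S"
  shows "a2a1 a S (\<lambda>B1 B2. h B1 B2 + h' B1 B2) p q = a2a1 a S h p q + a2a1 a S h' p q"
  using idVtau_add[OF tau_SymSym[OF h] tau_SymSym[OF h'] S] unfolding a2a1_def tau_add .

lemma Dm_eq: "idV_m (tau (idDelta h)) i B = (\<Sum>B1\<in>Pow B. if i \<notin> B - B1 then h B1 (insert i (B - B1)) else 0)"
  by (simp add: idV_m_def tau_def idDelta_def)

lemma Dm_add: "idV_m (tau (idDelta (\<lambda>B1 B2. h B1 B2 + h' B1 B2))) i B
   = idV_m (tau (idDelta h)) i B + idV_m (tau (idDelta h')) i B"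
  unfolding Dm_eq sum.distrib[symmetric] by (rule sum.cong) auto

lemma Dm_col: assumes S: "finite S" and h: "h \<in> SymSymM M S"
  shows "idV_m (tau (idDelta h)) i \<in> SymM M (S - {i})"
proof (rule SymMI)
  fix B assume B: "B \<subseteq> S - {i}"
  show "idV_m (tau (idDelta h)) i B \<in> M (S - {i} - B)"
    unfolding Dm_eq
  proof (rule sum_M)
    show "finite (S - {i} - B)" using S by simp
    fix B1 assume B1: "B1 \<in> Pow B"
    show "(if i \<notin> B - B1 then h B1 (insert i (B - B1)) else 0) \<in> M (S - {i} - B)"
    proof (cases "i \<in> S")
      case True
      have "h B1 (insert i (B - B1)) \<in> M (S - B1 - insert i (B - B1))"
        by (rule SymSymD1[OF h]) (use B B1 True in auto)
      moreover have "S - B1 - insert i (B - B1) = S - {i} - B" using B1 by auto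
      ultimately show ?thesis using B by auto
    next
      case False
      then have "h B1 (insert i (B - B1)) = 0" using SymSymD2[OF h] by auto
      then show ?thesis using M0 S by simp
    qed
  qed
next
  fix B assume B: "\<not> B \<subseteq> S - {i}"
  show "idV_m (tau (idDelta h)) i B = 0"
    unfolding Dm_eq
  proof (rule sum.neutral, rule ballI)
    fix B1 assume B1: "B1 \<in> Pow B"
    show "(if i \<notin> B - B1 then h B1 (insert i (B - B1)) else 0) = 0"
    proof (cases "i \<notin> B - B1")
      case True
      then have "\<not> (B1 \<subseteq> S \<and> insert i (B - B1) \<subseteq> S \<and> B1 \<inter> insert i (B - B1) = {})"
        using B B1 by auto
      then show ?thesis using True SymSymD2[OF h] by simp
    qed simp
  qed
qed

lemma a_prime_add: assumes h: "h \<in> SymSymM M S" and h': "h' \<in> SymSymM M S" and S: "finite S"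
  shows "a_prime a S (\<lambda>B1 B2. h B1 B2 + h' B1 B2) p q = a_prime a S h p q + a_prime a S h' p q"
proof (cases "p \<in> S \<and> q \<in> S - {p}")
  case True
  have e: "idV_m (tau (idDelta (\<lambda>B1 B2. h B1 B2 + h' B1 B2))) p
     = (\<lambda>B. idV_m (tau (idDelta h)) p B + idV_m (tau (idDelta h')) p B)"
    using Dm_add by (rule ext)
  have "a (S - {p}) (\<lambda>B. idV_m (tau (idDelta h)) p B + idV_m (tau (idDelta h')) p B)
     = (\<lambda>i. a (S - {p}) (idV_m (tau (idDelta h)) p) i + a (S - {p}) (idV_m (tau (idDelta h')) p) i)"
    using aadd[OF _ Dm_col[OF S h] Dm_col[OF S h']] S by simp
  then show ?thesis using True e unfolding a_prime_def idV_a_def by simp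
next
  case False then show ?thesis unfolding a_prime_def idV_a_def by auto
qed

lemma a_dprime_add: assumes h: "h \<in> SymSymM M S" and h': "h' \<in> SymSymM M S" and S: "finite S"
  shows "a_dprime a S (\<lambda>B1 B2. h B1 B2 + h' B1 B2) p q = a_dprime a S h p q + a_dprime a S h' p q"
  using a_prime_add[OF tau_SymSym[OF h] tau_SymSym[OF h'] S] unfolding a_dprime_def tau_add
  by (simp add: tau_def)

lemma single_SymM: "finite S \<Longrightarrow> B \<subseteq> S \<Longrightarrow> x \<in> M (S - B) \<Longrightarrow> single B x \<in> SymM M S"
  by (rule SymMI) (auto simp: single_def M0)

lemma single_0: "single B 0 = (\<lambda>_. 0)"
  by (simp add: single_def fun_eq_iff)

lemma decA: "finite S \<Longrightarrow> B \<subseteq> S \<Longrightarrow> x \<in> M (S - B) \<Longrightarrow> a S (single B x) i = Aop \<alpha> \<omega> S B x i"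
  using dec by (simp add: Aop_def)

lemma gen_SymSym: assumes "finite S" "B1 \<subseteq> S" "B2 \<subseteq> S" "B1 \<inter> B2 = {}" "x \<in> M (S - B1 - B2)"
  shows "gen B1 B2 x \<in> SymSymM M S"
  by (rule SymSymI) (use assms in \<open>auto simp: gen_def M0\<close>)

lemma core_gen: assumes S: "finite S" and B: "B1 \<subseteq> S" "B2 \<subseteq> S" "B1 \<inter> B2 = {}" and x: "x \<in> M (S - B1 - B2)"
  shows "idV_a a S (tau (idSym_a a S (gen B1 B2 x))) q p =
    (if q \<in> S \<and> p \<in> S - {q} \<and> q \<notin> B1 then Aop \<alpha> \<omega> (S - {q}) B1 (Aop \<alpha> \<omega> (S - B1) B2 x q) p else 0)"
proof -
  define y where "y = (if q \<in> S - B1 then Aop \<alpha> \<omega> (S - B1) B2 x q else 0)"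
  have x': "x \<in> M (S - B1 - B2)" using x .
  have col: "tau (idSym_a a S (gen B1 B2 x)) q = single B1 y"
  proof (rule ext)
    fix B
    show "tau (idSym_a a S (gen B1 B2 x)) q B = single B1 y B"
    proof (cases "B = B1")
      case True
      have g: "gen B1 B2 x B1 = single B2 x" by (simp add: gen_def single_def fun_eq_iff)
      have "q \<in> S - B1 \<Longrightarrow> a (S - B1) (single B2 x) q = Aop \<alpha> \<omega> (S - B1) B2 x q"
        by (rule decA) (use S B x in auto)
      then show ?thesis using True B g unfolding tau_def idSym_a_def single_def y_def by auto
    next
      case False
      have g: "gen B1 B2 x B = (\<lambda>_. 0)" using False by (simp add: gen_def fun_eq_iff)
      then show ?thesis using False S a_zero unfolding tau_def idSym_a_def single_def by auto
    qed
  qed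
  show ?thesis
  proof (cases "q \<in> S \<and> p \<in> S - {q}")
    case True
    note T = True
    show ?thesis
    proof (cases "q \<in> B1")
      case True
      then have "y = 0" by (simp add: y_def)
      then show ?thesis using T True col S a_zero[of "S - {q}"] unfolding idV_a_def by (simp add: single_0)
    next
      case False
      have sy: "single B2 x \<in> SymM M (S - B1)"
        by (rule single_SymM) (use S B x in auto)
      have "a (S - B1) (single B2 x) \<in> VM M (S - B1)" using aV[OF _ sy] S by simp
      then have "a (S - B1) (single B2 x) q \<in> M (S - B1 - {q})" using VMD T False by simp
      moreover have "a (S - B1) (single B2 x) q = Aop \<alpha> \<omega> (S - B1) B2 x q"
        by (rule decA) (use S B x in auto)
      moreover have "S - B1 - {q} = S - {q} - B1" by blast
      ultimately have ym: "y \<in> M (S - {q} - B1)" using T False by (simp add: y_def)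
      have "a (S - {q}) (single B1 y) p = Aop \<alpha> \<omega> (S - {q}) B1 y p"
        by (rule decA) (use S B ym False in auto)
      then show ?thesis using T False col unfolding idV_a_def y_def by auto
    qed
  next
    case False
    then show ?thesis unfolding idV_a_def by auto
  qed
qed

lemma Dm_gen: assumes S: "finite S" and B: "B1 \<subseteq> S" "B2 \<subseteq> S" "B1 \<inter> B2 = {}"
  shows "idV_m (tau (idDelta (gen B1 B2 x))) p B = (if p \<in> B2 \<and> B = B1 \<union> B2 - {p} then x else 0)"
proof (cases "finite B")
  case True
  define c where "c = (if p \<notin> B - B1 \<and> insert p (B - B1) = B2 then x else 0)"
  have "idV_m (tau (idDelta (gen B1 B2 x))) p B = (\<Sum>B1'\<in>Pow B. if B1' = B1 then c else 0)"
    unfolding Dm_eq by (rule sum.cong) (auto simp: gen_def c_def)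
  also have "\<dots> = (if B1 \<in> Pow B then c else 0)"
    using True by (simp add: sum.delta')
  also have "\<dots> = (if p \<in> B2 \<and> B = B1 \<union> B2 - {p} then x else 0)"
  proof -
    have "(B1 \<subseteq> B \<and> p \<notin> B - B1 \<and> insert p (B - B1) = B2) \<longleftrightarrow> (p \<in> B2 \<and> B = B1 \<union> B2 - {p})"
      using B(3) by blast
    then show ?thesis unfolding c_def by auto
  qed
  finally show ?thesis .
next
  case False
  have "finite (B1 \<union> B2 - {p})" using S B finite_subset by auto
  then have "B \<noteq> B1 \<union> B2 - {p}" using False by auto
  then show ?thesis using False unfolding Dm_eq by simp
qed

lemma prime_gen: assumes S: "finite S" and B: "B1 \<subseteq> S" "B2 \<subseteq> S" "B1 \<inter> B2 = {}" and x: "x \<in> M (S - B1 - B2)"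
  shows "a_prime a S (gen B1 B2 x) p q =
    (if p \<in> B2 \<and> q \<in> S - {p} then Aop \<alpha> \<omega> (S - {p}) (B1 \<union> B2 - {p}) x q else 0)"
proof (cases "p \<in> S \<and> q \<in> S - {p}")
  case True
  note T = True
  show ?thesis
  proof (cases "p \<in> B2")
    case True
    have e: "idV_m (tau (idDelta (gen B1 B2 x))) p = single (B1 \<union> B2 - {p}) x"
      by (rule ext) (simp add: Dm_gen[OF S B] single_def True)
    have "S - {p} - (B1 \<union> B2 - {p}) = S - B1 - B2" using True by blast
    then have "a (S - {p}) (single (B1 \<union> B2 - {p}) x) q = Aop \<alpha> \<omega> (S - {p}) (B1 \<union> B2 - {p}) x q"
      using S B x by (intro decA) auto
    then show ?thesis using T True e unfolding a_prime_def idV_a_def by simp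
  next
    case False
    have e: "idV_m (tau (idDelta (gen B1 B2 x))) p = (\<lambda>_. 0)"
      by (rule ext) (simp add: Dm_gen[OF S B] False)
    then show ?thesis using T False S a_zero[of "S - {p}"] unfolding a_prime_def idV_a_def by simp
  qed
next
  case False
  then show ?thesis using B unfolding a_prime_def idV_a_def by auto
qed

lemma tau_gen: "tau (gen B1 B2 x) = gen B2 B1 x"
  by (auto simp: tau_def gen_def fun_eq_iff)

lemma E_gen: assumes S: "finite S" and B: "B1 \<subseteq> S" "B2 \<subseteq> S" "B1 \<inter> B2 = {}" and x: "x \<in> M (S - B1 - B2)"
  shows "a1a2 a S (gen B1 B2 x) p q - a2a1 a S (gen B1 B2 x) p q = a_prime a S (gen B1 B2 x) p q - a_dprime a S (gen B1 B2 x) p q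
   \<longleftrightarrow>
    (if q \<in> S \<and> p \<in> S - {q} \<and> q \<notin> B1 then Aop \<alpha> \<omega> (S - {q}) B1 (Aop \<alpha> \<omega> (S - B1) B2 x q) p else 0)
  - (if p \<in> S \<and> q \<in> S - {p} \<and> p \<notin> B2 then Aop \<alpha> \<omega> (S - {p}) B2 (Aop \<alpha> \<omega> (S - B2) B1 x p) q else 0)
  = (if p \<in> B2 \<and> q \<in> S - {p} then Aop \<alpha> \<omega> (S - {p}) (B1 \<union> B2 - {p}) x q else 0)
  - (if q \<in> B1 \<and> p \<in> S - {q} then Aop \<alpha> \<omega> (S - {q}) (B2 \<union> B1 - {q}) x p else 0)"
proof -
  have B': "B2 \<inter> B1 = {}" using B(3) by blast
  have "S - B2 - B1 = S - B1 - B2" by blast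
  then have x': "x \<in> M (S - B2 - B1)" using x by simp
  have 1: "a1a2 a S (gen B1 B2 x) p q = (if q \<in> S \<and> p \<in> S - {q} \<and> q \<notin> B1 then Aop \<alpha> \<omega> (S - {q}) B1 (Aop \<alpha> \<omega> (S - B1) B2 x q) p else 0)"
    unfolding a1a2_def using core_gen[OF S B x] by (simp add: tau_def)
  have 2: "a2a1 a S (gen B1 B2 x) p q = (if p \<in> S \<and> q \<in> S - {p} \<and> p \<notin> B2 then Aop \<alpha> \<omega> (S - {p}) B2 (Aop \<alpha> \<omega> (S - B2) B1 x p) q else 0)"
    unfolding a2a1_def tau_gen using core_gen[OF S B(2) B(1) B' x'] by simp
  have 3: "a_dprime a S (gen B1 B2 x) p q = (if q \<in> B1 \<and> p \<in> S - {q} then Aop \<alpha> \<omega> (S - {q}) (B2 \<union> B1 - {q}) x p else 0)"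
    unfolding a_dprime_def tau_gen using prime_gen[OF S B(2) B(1) B' x'] by (simp add: tau_def)
  show ?thesis unfolding 1 2 3 prime_gen[OF S B x] ..
qed

definition ident where
  "ident S h \<longleftrightarrow> (\<forall>p q. a1a2 a S h p q - a2a1 a S h p q = a_prime a S h p q - a_dprime a S h p q)"

lemma diff4: "(A + A') - (B + B') = (A - B) + (A' - B')" for A A' B B' :: "'m"
  by (simp add: algebra_simps)

lemma ident_add: assumes h: "h \<in> SymSymM M S" and h': "h' \<in> SymSymM M S" and S: "finite S"
  and i: "ident S h" and i': "ident S h'"
  shows "ident S (\<lambda>B1 B2. h B1 B2 + h' B1 B2)"
  unfolding ident_def
proof (intro allI)
  fix p q
  have "a1a2 a S h p q - a2a1 a S h p q = a_prime a S h p q - a_dprime a S h p q"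
    "a1a2 a S h' p q - a2a1 a S h' p q = a_prime a S h' p q - a_dprime a S h' p q"
    using i i' unfolding ident_def by auto
  then show "a1a2 a S (\<lambda>B1 B2. h B1 B2 + h' B1 B2) p q - a2a1 a S (\<lambda>B1 B2. h B1 B2 + h' B1 B2) p q =
         a_prime a S (\<lambda>B1 B2. h B1 B2 + h' B1 B2) p q - a_dprime a S (\<lambda>B1 B2. h B1 B2 + h' B1 B2) p q"
    unfolding a1a2_add[OF h h' S] a2a1_add[OF h h' S] a_prime_add[OF h h' S] a_dprime_add[OF h h' S] diff4
    by simp
qed

definition Egen where
  "Egen S B1 B2 x p q \<longleftrightarrow>
    (if q \<in> S \<and> p \<in> S - {q} \<and> q \<notin> B1 then Aop \<alpha> \<omega> (S - {q}) B1 (Aop \<alpha> \<omega> (S - B1) B2 x q) p else 0)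
  - (if p \<in> S \<and> q \<in> S - {p} \<and> p \<notin> B2 then Aop \<alpha> \<omega> (S - {p}) B2 (Aop \<alpha> \<omega> (S - B2) B1 x p) q else 0)
  = (if p \<in> B2 \<and> q \<in> S - {p} then Aop \<alpha> \<omega> (S - {p}) (B1 \<union> B2 - {p}) x q else 0)
  - (if q \<in> B1 \<and> p \<in> S - {q} then Aop \<alpha> \<omega> (S - {q}) (B2 \<union> B1 - {q}) x p else 0)"

lemma W_iff_gen: "is_W_rep M a \<longleftrightarrow> (\<forall>S B1 B2 x p q. finite S \<and> B1 \<subseteq> S \<and> B2 \<subseteq> S \<and> B1 \<inter> B2 = {}
    \<and> x \<in> M (S - B1 - B2) \<longrightarrow> Egen S B1 B2 x p q)"
proof
  assume W: "is_W_rep M a"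
  show "\<forall>S B1 B2 x p q. finite S \<and> B1 \<subseteq> S \<and> B2 \<subseteq> S \<and> B1 \<inter> B2 = {}
    \<and> x \<in> M (S - B1 - B2) \<longrightarrow> Egen S B1 B2 x p q"
  proof (intro allI impI)
    fix S B1 B2 x p q assume as: "finite S \<and> B1 \<subseteq> S \<and> B2 \<subseteq> S \<and> B1 \<inter> B2 = {} \<and> x \<in> M (S - B1 - B2)"
    then have "gen B1 B2 x \<in> SymSymM M S" using gen_SymSym by blast
    then have "a1a2 a S (gen B1 B2 x) p q - a2a1 a S (gen B1 B2 x) p q = a_prime a S (gen B1 B2 x) p q - a_dprime a S (gen B1 B2 x) p q"
      using W as unfolding is_W_rep_def by blast
    then show "Egen S B1 B2 x p q" unfolding Egen_def using E_gen as by blast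
  qed
next
  assume G: "\<forall>S B1 B2 x p q. finite S \<and> B1 \<subseteq> S \<and> B2 \<subseteq> S \<and> B1 \<inter> B2 = {}
    \<and> x \<in> M (S - B1 - B2) \<longrightarrow> Egen S B1 B2 x p q"
  have identgen: "ident S (gen B1 B2 x)" if "finite S" "B1 \<subseteq> S" "B2 \<subseteq> S" "B1 \<inter> B2 = {}" "x \<in> M (S - B1 - B2)" for S B1 B2 x
    unfolding ident_def using E_gen[OF that] G that unfolding Egen_def by blast
  show "is_W_rep M a"
    unfolding is_W_rep_def
  proof (rule allI, rule impI, rule ballI)
    fix S h assume S: "finite S" and h: "h \<in> SymSymM M S"
    define X where "X = {(B1, B2). B1 \<subseteq> S \<and> B2 \<subseteq> S \<and> B1 \<inter> B2 = {}}"
    have fX: "finite X"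
    proof -
      have "X \<subseteq> Pow S \<times> Pow S" unfolding X_def by auto
      then show ?thesis using S finite_subset by blast
    qed
    define tr where "tr Y = (\<lambda>C1 C2. if (C1, C2) \<in> Y then h C1 C2 else 0)" for Y
    have main: "Y \<subseteq> X \<longrightarrow> tr Y \<in> SymSymM M S \<and> ident S (tr Y)" if fY: "finite Y" for Y
      using fY
    proof (induct Y rule: finite_induct)
      case empty
      have "tr {} = gen {} {} 0" by (simp add: tr_def gen_def fun_eq_iff)
      moreover have "0 \<in> M (S - {} - {})" using M0 S by simp
      ultimately show ?case using identgen[of S "{}" "{}" 0] gen_SymSym[of S "{}" "{}" 0] S by simp
    next
      case (insert y Y)
      obtain B1 B2 where y: "y = (B1, B2)" by (cases y)
      show ?case
      proof
        assume sub: "insert y Y \<subseteq> X"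
        then have B: "B1 \<subseteq> S" "B2 \<subseteq> S" "B1 \<inter> B2 = {}" using y unfolding X_def by auto
        have hx: "h B1 B2 \<in> M (S - B1 - B2)" using SymSymD1[OF h B] .
        have e: "tr (insert y Y) = (\<lambda>C1 C2. tr Y C1 C2 + gen B1 B2 (h B1 B2) C1 C2)"
          using insert(2) y by (auto simp: tr_def gen_def fun_eq_iff)
        have IH: "tr Y \<in> SymSymM M S" "ident S (tr Y)" using insert sub by auto
        have g: "gen B1 B2 (h B1 B2) \<in> SymSymM M S" using gen_SymSym[OF S B hx] .
        show "tr (insert y Y) \<in> SymSymM M S \<and> ident S (tr (insert y Y))"
          unfolding e using SymSym_add[OF IH(1) g S] ident_add[OF IH(1) g S IH(2) identgen[OF S B hx]] by simp
      qed
    qed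
    have "tr X = h"
    proof (intro ext)
      fix C1 C2 show "tr X C1 C2 = h C1 C2"
        using SymSymD2[OF h, of C1 C2] unfolding tr_def X_def by auto
    qed
    then have "ident S h" using main[OF fX] by simp
    then show "\<forall>i j. a1a2 a S h i j - a2a1 a S h i j = a_prime a S h i j - a_dprime a S h i j"
      unfolding ident_def by blast
  qed
qed

lemma AA_use: assumes c: "commute M is_singleton (alpha_family \<alpha>) is_singleton (alpha_family \<alpha>)"
  and "finite S" "a0 \<in> S" "c0 \<in> S" "a0 \<noteq> c0" "B \<subseteq> S" "D \<subseteq> S" "B \<inter> D = {}" "a0 \<notin> B" "a0 \<notin> D" "c0 \<notin> B" "c0 \<notin> D"
  "x \<in> M (S - (B \<union> D))"
  shows "\<alpha> (S - {a0}) c0 D (\<alpha> (S - D) a0 B x) = \<alpha> (S - {c0}) a0 B (\<alpha> (S - B) c0 D x)"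
proof -
  have "\<forall>x\<in>M (S - (B \<union> D)). alpha_family \<alpha> (S - {a0}) {c0} D (alpha_family \<alpha> (S - D) {a0} B x) = alpha_family \<alpha> (S - {c0}) {a0} B (alpha_family \<alpha> (S - B) {c0} D x)"
    using c assms unfolding commute_def by (intro mp[OF spec[OF spec[OF spec[OF spec[OF spec[OF c[unfolded commute_def]]]]]]]) auto
  then show ?thesis using assms by (simp add: alpha_family_def)
qed

lemma WW_use: assumes c: "commute M (\<lambda>A. A = {}) (omega_family \<omega>) (\<lambda>A. A = {}) (omega_family \<omega>)"
  and "finite S" "B \<subseteq> S" "D \<subseteq> S" "B \<inter> D = {}" "x \<in> M (S - (B \<union> D))"
  shows "\<omega> S D (\<omega> (S - D) B x) = \<omega> S B (\<omega> (S - B) D x)"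
proof -
  have "\<forall>x\<in>M (S - (B \<union> D)). omega_family \<omega> (S - {}) {} D (omega_family \<omega> (S - D) {} B x) = omega_family \<omega> (S - {}) {} B (omega_family \<omega> (S - B) {} D x)"
    using assms by (intro mp[OF spec[OF spec[OF spec[OF spec[OF spec[OF c[unfolded commute_def]]]]]]]) auto
  then show ?thesis using assms by (simp add: omega_family_def)
qed

lemma AW_use: assumes c: "commute M is_singleton (alpha_family \<alpha>) (\<lambda>A. A = {}) (omega_family \<omega>)"
  and "finite S" "a0 \<in> S" "B \<subseteq> S" "D \<subseteq> S" "B \<inter> D = {}" "a0 \<notin> B" "a0 \<notin> D" "x \<in> M (S - (B \<union> D))"
  shows "\<omega> (S - {a0}) D (\<alpha> (S - D) a0 B x) = \<alpha> S a0 B (\<omega> (S - B) D x)"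
proof -
  have "\<forall>x\<in>M (S - (B \<union> D)). omega_family \<omega> (S - {a0}) {} D (alpha_family \<alpha> (S - D) {a0} B x) = alpha_family \<alpha> (S - {}) {a0} B (omega_family \<omega> (S - B) {} D x)"
    using assms by (intro mp[OF spec[OF spec[OF spec[OF spec[OF spec[OF c[unfolded commute_def]]]]]]]) auto
  then show ?thesis using assms by (simp add: omega_family_def alpha_family_def)
qed

lemma gen_if:
  assumes cAA: "commute M is_singleton (alpha_family \<alpha>) is_singleton (alpha_family \<alpha>)"
    and cWW: "commute M (\<lambda>A. A = {}) (omega_family \<omega>) (\<lambda>A. A = {}) (omega_family \<omega>)"
    and cAW: "commute M is_singleton (alpha_family \<alpha>) (\<lambda>A. A = {}) (omega_family \<omega>)"
    and cb: "\<forall>S A B i j x. finite S \<and> A \<subseteq> S \<and> B \<subseteq> S \<and> A \<inter> B = {} \<and> j \<in> B \<and> i \<in> S - (A \<union> B)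
        \<and> x \<in> M (S - (A \<union> B)) \<longrightarrow>
        \<alpha> (S - {i}) j A (\<alpha> (S - A) i B x) = \<alpha> (S - {j}) i ((A \<union> B) - {j}) x"
    and cc: "\<forall>S A B j x. finite S \<and> A \<subseteq> S \<and> B \<subseteq> S \<and> A \<inter> B = {} \<and> j \<in> B
        \<and> x \<in> M (S - (A \<union> B)) \<longrightarrow>
        \<alpha> S j A (\<omega> (S - A) B x) = \<omega> (S - {j}) ((A \<union> B) - {j}) x"
    and S: "finite S" and B: "B1 \<subseteq> S" "B2 \<subseteq> S" "B1 \<inter> B2 = {}" and x: "x \<in> M (S - B1 - B2)"
  shows "Egen S B1 B2 x p q"
proof (cases "p \<in> S \<and> q \<in> S \<and> p \<noteq> q")
  case False
  then show ?thesis using B unfolding Egen_def by auto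
next
  case True
  then have pS: "p \<in> S" and qS: "q \<in> S" and pq: "p \<noteq> q" "q \<noteq> p" by auto
  have xM: "\<And>T. T = S - B1 - B2 \<Longrightarrow> x \<in> M T" using x by simp
  have d: "\<And>y. y \<in> B1 \<Longrightarrow> y \<notin> B2" using B(3) by blast
  have e0: "S - {p} - {q} = S - {q} - {p}" by blast
  consider "p \<in> B1" | "p \<in> B2" | "p \<notin> B1" "p \<notin> B2" by blast
  then show ?thesis
  proof cases
    case 1
    then have p1: "p \<in> B1" and p2: "p \<notin> B2" using d by blast+
    consider "q \<in> B1" | "q \<in> B2" | "q \<notin> B1" "q \<notin> B2" by blast
    then show ?thesis
    proof cases
      case 1
      then have q1: "q \<in> B1" and q2: "q \<notin> B2" using d by blast+
      have i0: "\<alpha> (S - {p}) q B2 (\<omega> (S - {p} - B2) (B1 - {p}) x) = \<omega> (S - {p} - {q}) ((B2 \<union> (B1 - {p})) - {q}) x"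
        by (rule cc[rule_format], intro conjI) (use S B p1 p2 q1 q2 pq in \<open>auto intro!: xM\<close>)
      have e1: "S - {p} - B2 = S - B2 - {p}" "(B2 \<union> (B1 - {p})) - {q} = B2 \<union> B1 - {q} - {p}" using p2 by auto
      show ?thesis unfolding Egen_def Aop_def using p1 p2 q1 q2 pS qS pq apply simp
        using i0 e0 e1 by metis
    next
      case 2
      then have q2: "q \<in> B2" and q1: "q \<notin> B1" using d by blast+
      have i0: "\<omega> (S - {p} - {q}) (B1 - {p}) (\<omega> (S - {p} - {q} - (B1 - {p})) (B2 - {q}) x) = \<omega> (S - {p} - {q}) (B2 - {q}) (\<omega> (S - {p} - {q} - (B2 - {q})) (B1 - {p}) x)"
        by (rule WW_use[OF cWW]) (use S B p1 p2 q1 q2 pq in \<open>auto intro!: xM\<close>)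
      have e1: "S - {p} - {q} - (B1 - {p}) = S - B1 - {q}" "S - {p} - {q} - (B2 - {q}) = S - B2 - {p}"
        using p1 q2 by blast+
      show ?thesis unfolding Egen_def Aop_def using p1 p2 q1 q2 pS qS pq apply simp
        using i0 e0 e1 by metis
    next
      case 3
      then have q2: "q \<notin> B2" and q1: "q \<notin> B1" by blast+
      have i0: "\<omega> (S - {p} - {q}) (B1 - {p}) (\<alpha> (S - {p} - (B1 - {p})) q B2 x) = \<alpha> (S - {p}) q B2 (\<omega> (S - {p} - B2) (B1 - {p}) x)"
        by (rule AW_use[OF cAW]) (use S B p1 p2 q1 q2 pq qS in \<open>auto intro!: xM\<close>)
      have e1: "S - {p} - (B1 - {p}) = S - B1" "S - {p} - B2 = S - B2 - {p}"
        using p1 by blast+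
      show ?thesis unfolding Egen_def Aop_def using p1 p2 q1 q2 pS qS pq apply simp
        using i0 e0 e1 by metis
    qed
  next
    case 2
    then have p2: "p \<in> B2" and p1: "p \<notin> B1" using d by blast+
    consider "q \<in> B1" | "q \<in> B2" | "q \<notin> B1" "q \<notin> B2" by blast
    then show ?thesis
    proof cases
      case 1
      then have q1: "q \<in> B1" and q2: "q \<notin> B2" using d by blast+
      have e1: "B1 \<union> B2 - {p} - {q} = B2 \<union> B1 - {q} - {p}" by blast
      have i0: "\<omega> (S - {p} - {q}) (B1 \<union> B2 - {p} - {q}) x = \<omega> (S - {q} - {p}) (B2 \<union> B1 - {q} - {p}) x"
        using e0 e1 by metis
      show ?thesis unfolding Egen_def Aop_def using p1 p2 q1 q2 pS qS pq i0 by simp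
    next
      case 2
      then have q2: "q \<in> B2" and q1: "q \<notin> B1" using d by blast+
      have i0: "\<alpha> (S - {q}) p B1 (\<omega> (S - {q} - B1) (B2 - {q}) x) = \<omega> (S - {q} - {p}) ((B1 \<union> (B2 - {q})) - {p}) x"
        by (rule cc[rule_format], intro conjI) (use S B p1 p2 q1 q2 pq in \<open>auto intro!: xM\<close>)
      have e1: "S - {q} - B1 = S - B1 - {q}" "(B1 \<union> (B2 - {q})) - {p} = B1 \<union> B2 - {p} - {q}" using q1 by auto
      show ?thesis unfolding Egen_def Aop_def using p1 p2 q1 q2 pS qS pq apply simp
        using i0 e0 e1 by metis
    next
      case 3
      then have q2: "q \<notin> B2" and q1: "q \<notin> B1" by blast+
      have i0: "\<alpha> (S - {q}) p B1 (\<alpha> (S - B1) q B2 x) = \<alpha> (S - {p}) q ((B1 \<union> B2) - {p}) x"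
        by (rule cb[rule_format], intro conjI) (use S B p1 p2 q1 q2 pq qS in \<open>auto intro!: xM\<close>)
      show ?thesis unfolding Egen_def Aop_def using p1 p2 q1 q2 pS qS pq i0 by simp
    qed
  next
    case 3
    then have p2: "p \<notin> B2" and p1: "p \<notin> B1" by blast+
    consider "q \<in> B1" | "q \<in> B2" | "q \<notin> B1" "q \<notin> B2" by blast
    then show ?thesis
    proof cases
      case 1
      then have q1: "q \<in> B1" and q2: "q \<notin> B2" using d by blast+
      have i0: "\<alpha> (S - {p}) q B2 (\<alpha> (S - B2) p B1 x) = \<alpha> (S - {q}) p ((B2 \<union> B1) - {q}) x"
        by (rule cb[rule_format], intro conjI) (use S B p1 p2 q1 q2 pq pS in \<open>auto intro!: xM\<close>)
      show ?thesis unfolding Egen_def Aop_def using p1 p2 q1 q2 pS qS pq i0 by simp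
    next
      case 2
      then have q2: "q \<in> B2" and q1: "q \<notin> B1" using d by blast+
      have i0: "\<omega> (S - {q} - {p}) (B2 - {q}) (\<alpha> (S - {q} - (B2 - {q})) p B1 x) = \<alpha> (S - {q}) p B1 (\<omega> (S - {q} - B1) (B2 - {q}) x)"
        by (rule AW_use[OF cAW]) (use S B p1 p2 q1 q2 pq pS in \<open>auto intro!: xM\<close>)
      have e1: "S - {q} - (B2 - {q}) = S - B2" "S - {q} - B1 = S - B1 - {q}"
        using q2 by blast+
      show ?thesis unfolding Egen_def Aop_def using p1 p2 q1 q2 pS qS pq apply simp
        using i0 e0 e1 by metis
    next
      case 3
      then have q2: "q \<notin> B2" and q1: "q \<notin> B1" by blast+
      have i0: "\<alpha> (S - {q}) p B1 (\<alpha> (S - B1) q B2 x) = \<alpha> (S - {p}) q B2 (\<alpha> (S - B2) p B1 x)"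
        by (rule AA_use[OF cAA]) (use S B p1 p2 q1 q2 pq pS qS in \<open>auto intro!: xM\<close>)
      show ?thesis unfolding Egen_def Aop_def using p1 p2 q1 q2 pS qS pq i0 by simp
    qed
  qed
qed

lemma gen_onlyif:
  assumes inf: "infinite (UNIV :: 'a set)"
    and G: "\<forall>S B1 B2 x p q. finite S \<and> B1 \<subseteq> S \<and> B2 \<subseteq> S \<and> B1 \<inter> B2 = {}
    \<and> x \<in> M (S - B1 - B2) \<longrightarrow> Egen S B1 B2 x p q"
  shows "commute M is_singleton (alpha_family \<alpha>) is_singleton (alpha_family \<alpha>) \<and>
     commute M (\<lambda>A. A = {}) (omega_family \<omega>) (\<lambda>A. A = {}) (omega_family \<omega>) \<and>
     commute M is_singleton (alpha_family \<alpha>) (\<lambda>A. A = {}) (omega_family \<omega>) \<and>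
     (\<forall>S A B i j x. finite S \<and> A \<subseteq> S \<and> B \<subseteq> S \<and> A \<inter> B = {} \<and> j \<in> B \<and> i \<in> S - (A \<union> B)
        \<and> x \<in> M (S - (A \<union> B)) \<longrightarrow>
        \<alpha> (S - {i}) j A (\<alpha> (S - A) i B x) = \<alpha> (S - {j}) i ((A \<union> B) - {j}) x) \<and>
     (\<forall>S A B j x. finite S \<and> A \<subseteq> S \<and> B \<subseteq> S \<and> A \<inter> B = {} \<and> j \<in> B
        \<and> x \<in> M (S - (A \<union> B)) \<longrightarrow>
        \<alpha> S j A (\<omega> (S - A) B x) = \<omega> (S - {j}) ((A \<union> B) - {j}) x)"
proof (intro conjI)
  have Gi: "Egen S B1 B2 x p q" if "finite S" "B1 \<subseteq> S" "B2 \<subseteq> S" "B1 \<inter> B2 = {}" "x \<in> M (S - B1 - B2)" for S B1 B2 x p q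
    using that by (intro G[rule_format] conjI)
  show "commute M is_singleton (alpha_family \<alpha>) is_singleton (alpha_family \<alpha>)"
    unfolding commute_def
  proof (intro allI impI ballI)
    fix S A B C D x
    assume as: "finite S \<and> A \<subseteq> S \<and> B \<subseteq> S \<and> C \<subseteq> S \<and> D \<subseteq> S \<and> A \<inter> B = {} \<and> A \<inter> C = {} \<and> A \<inter> D = {} \<and>
       B \<inter> C = {} \<and> B \<inter> D = {} \<and> C \<inter> D = {} \<and> is_singleton A \<and> is_singleton C"
      and x: "x \<in> M (S - (B \<union> D))"
    obtain a0 where a0: "A = {a0}" using as unfolding is_singleton_def by auto
    obtain c0 where c0: "C = {c0}" using as unfolding is_singleton_def by auto
    have "S - D - B = S - (B \<union> D)" by blast
    then have x': "x \<in> M (S - D - B)" using x by simp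
    have "Egen S D B x c0 a0" by (rule Gi) (use as x' in auto)
    moreover have f: "a0 \<in> S" "c0 \<in> S" "a0 \<noteq> c0" "c0 \<noteq> a0" "a0 \<notin> B" "a0 \<notin> D" "c0 \<notin> B" "c0 \<notin> D"
      using as a0 c0 by auto
    ultimately show "alpha_family \<alpha> (S - A) C D (alpha_family \<alpha> (S - D) A B x) = alpha_family \<alpha> (S - C) A B (alpha_family \<alpha> (S - B) C D x)"
      unfolding Egen_def Aop_def alpha_family_def a0 c0 by simp
  qed
  show "commute M (\<lambda>A. A = {}) (omega_family \<omega>) (\<lambda>A. A = {}) (omega_family \<omega>)"
    unfolding commute_def
  proof (intro allI impI ballI)
    fix S A B C D x
    assume as: "finite S \<and> A \<subseteq> S \<and> B \<subseteq> S \<and> C \<subseteq> S \<and> D \<subseteq> S \<and> A \<inter> B = {} \<and> A \<inter> C = {} \<and> A \<inter> D = {} \<and>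
       B \<inter> C = {} \<and> B \<inter> D = {} \<and> C \<inter> D = {} \<and> A = {} \<and> C = {}"
      and x: "x \<in> M (S - (B \<union> D))"
    obtain p where p: "p \<notin> S" using ex_new_if_finite[OF inf, of S] as by auto
    obtain q where q: "q \<notin> insert p S" using ex_new_if_finite[OF inf, of "insert p S"] as by auto
    have f: "p \<notin> S" "q \<notin> S" "p \<noteq> q" "q \<noteq> p" "p \<notin> B" "p \<notin> D" "q \<notin> B" "q \<notin> D" "B \<subseteq> S" "D \<subseteq> S" "B \<inter> D = {}" "finite S"
      using p q as by auto
    define S' where "S' = insert p (insert q S)"
    have x': "x \<in> M (S' - insert p D - insert q B)"
    proof -
      have "S' - insert p D - insert q B = S - (B \<union> D)" unfolding S'_def using f by blast
      then show ?thesis using x by simp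
    qed
    have "Egen S' (insert p D) (insert q B) x p q" by (rule Gi) (use f x' in \<open>auto simp: S'_def\<close>)
    moreover have f2: "p \<in> S'" "q \<in> S'" unfolding S'_def by auto
    ultimately have r: "\<omega> (S' - {q} - {p}) D (\<omega> (S' - insert p D - {q}) B x) =
      \<omega> (S' - {p} - {q}) B (\<omega> (S' - insert q B - {p}) D x)"
      unfolding Egen_def Aop_def using f by simp
    have e: "S' - {q} - {p} = S" "S' - {p} - {q} = S" "S' - insert p D - {q} = S - D" "S' - insert q B - {p} = S - B"
      unfolding S'_def using f by auto
    show "omega_family \<omega> (S - A) C D (omega_family \<omega> (S - D) A B x) = omega_family \<omega> (S - C) A B (omega_family \<omega> (S - B) C D x)"
      using r as unfolding e by (simp add: omega_family_def)
  qed
  show "commute M is_singleton (alpha_family \<alpha>) (\<lambda>A. A = {}) (omega_family \<omega>)"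
    unfolding commute_def
  proof (intro allI impI ballI)
    fix S A B C D x
    assume as: "finite S \<and> A \<subseteq> S \<and> B \<subseteq> S \<and> C \<subseteq> S \<and> D \<subseteq> S \<and> A \<inter> B = {} \<and> A \<inter> C = {} \<and> A \<inter> D = {} \<and>
       B \<inter> C = {} \<and> B \<inter> D = {} \<and> C \<inter> D = {} \<and> is_singleton A \<and> C = {}"
      and x: "x \<in> M (S - (B \<union> D))"
    obtain a0 where a0: "A = {a0}" using as unfolding is_singleton_def by auto
    obtain p where p: "p \<notin> S" using ex_new_if_finite[OF inf, of S] as by auto
    have f: "p \<notin> S" "a0 \<in> S" "p \<noteq> a0" "a0 \<noteq> p" "p \<notin> B" "p \<notin> D" "a0 \<notin> B" "a0 \<notin> D" "B \<subseteq> S" "D \<subseteq> S" "B \<inter> D = {}" "finite S"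
      using p as a0 by auto
    define S' where "S' = insert p S"
    have x': "x \<in> M (S' - insert p D - B)"
    proof -
      have "S' - insert p D - B = S - (B \<union> D)" unfolding S'_def using f by blast
      then show ?thesis using x by simp
    qed
    have "Egen S' (insert p D) B x p a0" by (rule Gi) (use f x' in \<open>auto simp: S'_def\<close>)
    moreover have f2: "p \<in> S'" "a0 \<in> S'" unfolding S'_def using f by auto
    ultimately have r: "\<omega> (S' - {a0} - {p}) D (\<alpha> (S' - insert p D) a0 B x) =
      \<alpha> (S' - {p}) a0 B (\<omega> (S' - B - {p}) D x)"
      unfolding Egen_def Aop_def using f by simp
    have e: "S' - {a0} - {p} = S - {a0}" "S' - insert p D = S - D" "S' - {p} = S" "S' - B - {p} = S - B"
      unfolding S'_def using f by auto
    show "omega_family \<omega> (S - A) C D (alpha_family \<alpha> (S - D) A B x) = alpha_family \<alpha> (S - C) A B (omega_family \<omega> (S - B) C D x)"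
      using r as a0 unfolding e by (simp add: omega_family_def alpha_family_def)
  qed
  show "\<forall>S A B i j x. finite S \<and> A \<subseteq> S \<and> B \<subseteq> S \<and> A \<inter> B = {} \<and> j \<in> B \<and> i \<in> S - (A \<union> B)
        \<and> x \<in> M (S - (A \<union> B)) \<longrightarrow>
        \<alpha> (S - {i}) j A (\<alpha> (S - A) i B x) = \<alpha> (S - {j}) i ((A \<union> B) - {j}) x"
  proof (intro allI impI)
    fix S A B i j x
    assume as: "finite S \<and> A \<subseteq> S \<and> B \<subseteq> S \<and> A \<inter> B = {} \<and> j \<in> B \<and> i \<in> S - (A \<union> B) \<and> x \<in> M (S - (A \<union> B))"
    have "S - A - B = S - (A \<union> B)" by blast
    then have x': "x \<in> M (S - A - B)" using as by simp
    have "Egen S A B x j i" by (rule Gi) (use as x' in auto)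
    moreover have f: "i \<in> S" "j \<in> S" "i \<noteq> j" "j \<noteq> i" "j \<in> B" "j \<notin> A" "i \<notin> A" "i \<notin> B"
      using as by auto
    ultimately show "\<alpha> (S - {i}) j A (\<alpha> (S - A) i B x) = \<alpha> (S - {j}) i ((A \<union> B) - {j}) x"
      unfolding Egen_def Aop_def by simp
  qed
  show "\<forall>S A B j x. finite S \<and> A \<subseteq> S \<and> B \<subseteq> S \<and> A \<inter> B = {} \<and> j \<in> B
        \<and> x \<in> M (S - (A \<union> B)) \<longrightarrow>
        \<alpha> S j A (\<omega> (S - A) B x) = \<omega> (S - {j}) ((A \<union> B) - {j}) x"
  proof (intro allI impI)
    fix S A B j x
    assume as: "finite S \<and> A \<subseteq> S \<and> B \<subseteq> S \<and> A \<inter> B = {} \<and> j \<in> B \<and> x \<in> M (S - (A \<union> B))"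
    obtain p where p: "p \<notin> S" using ex_new_if_finite[OF inf, of S] as by auto
    have f: "p \<notin> S" "j \<in> S" "p \<noteq> j" "j \<noteq> p" "p \<notin> A" "p \<notin> B" "j \<in> B" "j \<notin> A" "A \<subseteq> S" "B \<subseteq> S" "A \<inter> B = {}" "finite S"
      using p as by auto
    define S' where "S' = insert p S"
    have x': "x \<in> M (S' - insert p B - A)"
    proof -
      have "S' - insert p B - A = S - (A \<union> B)" unfolding S'_def using f by blast
      then show ?thesis using as by simp
    qed
    have "Egen S' (insert p B) A x p j" by (rule Gi) (use f x' in \<open>auto simp: S'_def\<close>)
    moreover have f2: "p \<in> S'" "j \<in> S'" unfolding S'_def using f by auto
    ultimately have r: "\<alpha> (S' - {p}) j A (\<omega> (S' - A - {p}) B x) =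
      \<omega> (S' - {j} - {p}) (insert p (A \<union> B) - {j} - {p}) x"
      unfolding Egen_def Aop_def using f by simp
    have e: "S' - {p} = S" "S' - A - {p} = S - A" "S' - {j} - {p} = S - {j}" "insert p (A \<union> B) - {j} - {p} = A \<union> B - {j}"
      unfolding S'_def using f by auto
    show "\<alpha> S j A (\<omega> (S - A) B x) = \<omega> (S - {j}) ((A \<union> B) - {j}) x"
      using r unfolding e .
  qed
qed

end

theorem proposition6p6:
  fixes scale :: "'k::comm_ring_1 \<Rightarrow> 'm::ab_group_add \<Rightarrow> 'm"
    and M :: "'a set \<Rightarrow> 'm set"
    and act :: "('a \<Rightarrow> 'a) \<Rightarrow> 'a set \<Rightarrow> 'm \<Rightarrow> 'm"
    and a :: "'a set \<Rightarrow> ('a set \<Rightarrow> 'm) \<Rightarrow> 'a \<Rightarrow> 'm"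
    and \<alpha> :: "'a set \<Rightarrow> 'a \<Rightarrow> 'a set \<Rightarrow> 'm \<Rightarrow> 'm"
    and \<omega> :: "'a set \<Rightarrow> 'a set \<Rightarrow> 'm \<Rightarrow> 'm"
  assumes labels: "infinite (UNIV :: 'a set)"
    and M: "FB_module scale M act"
    and a: "FB_map_SymM_VM scale M act a"
    and decomp: "\<And>S B x. finite S \<Longrightarrow> B \<subseteq> S \<Longrightarrow> x \<in> M (S - B) \<Longrightarrow>
        a S (single B x) =
          (\<lambda>i. if i \<in> B then \<omega> (S - {i}) (B - {i}) x
               else if i \<in> S then \<alpha> S i B x else 0)"
  shows "is_W_rep M a \<longleftrightarrow>
    (commute M is_singleton (alpha_family \<alpha>) is_singleton (alpha_family \<alpha>) \<and>
     commute M (\<lambda>A. A = {}) (omega_family \<omega>) (\<lambda>A. A = {}) (omega_family \<omega>) \<and>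
     commute M is_singleton (alpha_family \<alpha>) (\<lambda>A. A = {}) (omega_family \<omega>) \<and>
     (\<forall>S A B i j x. finite S \<and> A \<subseteq> S \<and> B \<subseteq> S \<and> A \<inter> B = {} \<and> j \<in> B \<and> i \<in> S - (A \<union> B)
        \<and> x \<in> M (S - (A \<union> B)) \<longrightarrow>
        \<alpha> (S - {i}) j A (\<alpha> (S - A) i B x) = \<alpha> (S - {j}) i ((A \<union> B) - {j}) x) \<and>
     (\<forall>S A B j x. finite S \<and> A \<subseteq> S \<and> B \<subseteq> S \<and> A \<inter> B = {} \<and> j \<in> B
        \<and> x \<in> M (S - (A \<union> B)) \<longrightarrow>
        \<alpha> S j A (\<omega> (S - A) B x) = \<omega> (S - {j}) ((A \<union> B) - {j}) x))"
proof -
  have mod: "module scale" and sub: "\<And>S. finite S \<Longrightarrow> module.subspace scale (M S)"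
    using M unfolding FB_module_def by auto
  interpret wr M a \<alpha> \<omega>
  proof
    show "finite T \<Longrightarrow> 0 \<in> M T" for T using module.subspace_0[OF mod sub] .
    show "finite T \<Longrightarrow> x \<in> M T \<Longrightarrow> y \<in> M T \<Longrightarrow> x + y \<in> M T" for T x y
      using module.subspace_add[OF mod sub] by blast
    show "finite S \<Longrightarrow> f \<in> SymM M S \<Longrightarrow> a S f \<in> VM M S" for S f
      using a unfolding FB_map_SymM_VM_def by blast
    show "finite S \<Longrightarrow> f \<in> SymM M S \<Longrightarrow> g \<in> SymM M S \<Longrightarrow>
        a S (\<lambda>B. f B + g B) = (\<lambda>i. a S f i + a S g i)" for S f g
      using a unfolding FB_map_SymM_VM_def by blast
    show "\<And>S B x. finite S \<Longrightarrow> B \<subseteq> S \<Longrightarrow> x \<in> M (S - B) \<Longrightarrow>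
        a S (single B x) =
          (\<lambda>i. if i \<in> B then \<omega> (S - {i}) (B - {i}) x
               else if i \<in> S then \<alpha> S i B x else 0)"
      by (rule decomp)
  qed
  show ?thesis
  proof
    assume "is_W_rep M a"
    then show "commute M is_singleton (alpha_family \<alpha>) is_singleton (alpha_family \<alpha>) \<and>
     commute M (\<lambda>A. A = {}) (omega_family \<omega>) (\<lambda>A. A = {}) (omega_family \<omega>) \<and>
     commute M is_singleton (alpha_family \<alpha>) (\<lambda>A. A = {}) (omega_family \<omega>) \<and>
     (\<forall>S A B i j x. finite S \<and> A \<subseteq> S \<and> B \<subseteq> S \<and> A \<inter> B = {} \<and> j \<in> B \<and> i \<in> S - (A \<union> B)
        \<and> x \<in> M (S - (A \<union> B)) \<longrightarrow>
        \<alpha> (S - {i}) j A (\<alpha> (S - A) i B x) = \<alpha> (S - {j}) i ((A \<union> B) - {j}) x) \<and>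
     (\<forall>S A B j x. finite S \<and> A \<subseteq> S \<and> B \<subseteq> S \<and> A \<inter> B = {} \<and> j \<in> B
        \<and> x \<in> M (S - (A \<union> B)) \<longrightarrow>
        \<alpha> S j A (\<omega> (S - A) B x) = \<omega> (S - {j}) ((A \<union> B) - {j}) x)"
      by (rule gen_onlyif[OF labels iffD1[OF W_iff_gen]])
  next
    assume c: "commute M is_singleton (alpha_family \<alpha>) is_singleton (alpha_family \<alpha>) \<and>
     commute M (\<lambda>A. A = {}) (omega_family \<omega>) (\<lambda>A. A = {}) (omega_family \<omega>) \<and>
     commute M is_singleton (alpha_family \<alpha>) (\<lambda>A. A = {}) (omega_family \<omega>) \<and>
     (\<forall>S A B i j x. finite S \<and> A \<subseteq> S \<and> B \<subseteq> S \<and> A \<inter> B = {} \<and> j \<in> B \<and> i \<in> S - (A \<union> B)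
        \<and> x \<in> M (S - (A \<union> B)) \<longrightarrow>
        \<alpha> (S - {i}) j A (\<alpha> (S - A) i B x) = \<alpha> (S - {j}) i ((A \<union> B) - {j}) x) \<and>
     (\<forall>S A B j x. finite S \<and> A \<subseteq> S \<and> B \<subseteq> S \<and> A \<inter> B = {} \<and> j \<in> B
        \<and> x \<in> M (S - (A \<union> B)) \<longrightarrow>
        \<alpha> S j A (\<omega> (S - A) B x) = \<omega> (S - {j}) ((A \<union> B) - {j}) x)"
    have "\<forall>S B1 B2 x p q. finite S \<and> B1 \<subseteq> S \<and> B2 \<subseteq> S \<and> B1 \<inter> B2 = {}
      \<and> x \<in> M (S - B1 - B2) \<longrightarrow> Egen S B1 B2 x p q"
    proof (intro allI impI)
      fix S B1 B2 x p q
      assume h: "finite S \<and> B1 \<subseteq> S \<and> B2 \<subseteq> S \<and> B1 \<inter> B2 = {} \<and> x \<in> M (S - B1 - B2)"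
      show "Egen S B1 B2 x p q"
      proof (rule gen_if)
        show "finite S" "B1 \<subseteq> S" "B2 \<subseteq> S" "B1 \<inter> B2 = {}" "x \<in> M (S - B1 - B2)" using h by simp_all
      qed (use c in simp_all)
    qed
    then show "is_W_rep M a" using W_iff_gen by (rule iffD2[rotated])
  qed
qed

end
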